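(* Let $\lambda$ be the uniform distribution on $[0,1]$. There is no regression estimation procedure that is $L_2(\lambda)$-consistent for the family of stable sequences $(\mathbf{x},\mathbf{y})$ with $x_i\in[0,1]$ and $y_i\in\{0,1\}$ for all $i$, having limiting distribution $\lambda$ and limiting regression $m$ with $V(m:0,1)<\infty$. That is, for every regression estimation procedure $\Phi=\{\phi_1,\phi_2,\ldots\}$ there exist a measurable $m:\mathbb{R}\to\mathbb{R}$ with $\int|m|\,d\lambda<\infty$ and $V(m:0,1)<\infty$ and a pair $(\mathbf{x},\mathbf{y})\in\Omega(\lambda,m)$ with $x_i\in[0,1]$, $y_i\in\{0,1\}$ for all $i$, such that $\int\big(\phi_n(x;(x_1,y_1),\ldots,(x_n,y_n))-m(x)\big)^2\lambda(dx)$ does not converge to $0$ as $n\to\infty$.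
   Context: For a probability distribution $\mu$ on $\mathbb{R}$ and a measurable $m:\mathbb{R}\to\mathbb{R}$ with $\int|m|\,d\mu<\infty$, set $\nu(A)=\int_A m\,d\mu$. For real sequences $\mathbf{x}=(x_1,x_2,\ldots)$, $\mathbf{y}=(y_1,y_2,\ldots)$ let $\hat\mu_n(A)=\frac1n\sum_{i=1}^nI\{x_i\in A\}$ and $\hat\nu_n(A)=\frac1n\sum_{i=1}^ny_iI\{x_i\in A\}$. The pair $(\mathbf{x},\mathbf{y})$ is in $\Omega(\mu,m)$ (stable with limiting distribution $\mu$ and limiting regression $m$) if for every $t\in\mathbb{R}$: $\hat\mu_n(-\infty,t]\to\mu(-\infty,t]$, $\hat\mu_n(\{t\})\to\mu(\{t\})$, $\hat\nu_n(-\infty,t]\to\nu(-\infty,t]$, $\hat\nu_n(\{t\})\to\nu(\{t\})$. The total variation of $h$ on $(a,b]$ is $V(h:a,b)=\sup\sum_{i=1}^n|h(t_i)-h(t_{i-1})|$ over all finite $a<t_0<\cdots<t_n=b$. A regression estimation procedure is a sequence $\Phi=\{\phi_n\}$ where $\phi_n$ assigns to each finite sample $(x_1,y_1),\ldots,(x_n,y_n)$ a measurable function $\phi_n(\cdot;(x_1,y_1),\ldots,(x_n,y_n)):\mathbb{R}\to\mathbb{R}$; it is $L_2(\lambda)$-consistent for a family of pairs if for every pair in the family, with limiting regression $m$, $\int(\phi_n(x;(x_1,y_1),\ldots,(x_n,y_n))-m(x))^2\lambda(dx)\to0$. *)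

theory Defs
  imports "HOL-Analysis.Analysis"
begin

definition unif01 :: "real measure" where
  "unif01 = uniform_measure lborel {0..1}"

text \<open>Empirical measures; the sample x_1,...,x_n is x 0, ..., x (n-1).\<close>
definition emp_mu :: "(nat \<Rightarrow> real) \<Rightarrow> nat \<Rightarrow> real set \<Rightarrow> real" where
  "emp_mu x n A = (\<Sum>i<n. indicator A (x i)) / real n"

definition emp_nu :: "(nat \<Rightarrow> real) \<Rightarrow> (nat \<Rightarrow> real) \<Rightarrow> nat \<Rightarrow> real set \<Rightarrow> real" where
  "emp_nu x y n A = (\<Sum>i<n. y i * indicator A (x i)) / real n"

definition reg_nu :: "real measure \<Rightarrow> (real \<Rightarrow> real) \<Rightarrow> real set \<Rightarrow> real" where
  "reg_nu \<mu> m A = (LINT u:A|\<mu>. m u)"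

definition stable :: "real measure \<Rightarrow> (real \<Rightarrow> real) \<Rightarrow> (nat \<Rightarrow> real) \<Rightarrow> (nat \<Rightarrow> real) \<Rightarrow> bool" where
  "stable \<mu> m x y \<longleftrightarrow>
     (\<forall>t::real.
        (\<lambda>n. emp_mu x n {..t}) \<longlonglongrightarrow> measure \<mu> {..t} \<and>
        (\<lambda>n. emp_mu x n {t}) \<longlonglongrightarrow> measure \<mu> {t} \<and>
        (\<lambda>n. emp_nu x y n {..t}) \<longlonglongrightarrow> reg_nu \<mu> m {..t} \<and>
        (\<lambda>n. emp_nu x y n {t}) \<longlonglongrightarrow> reg_nu \<mu> m {t})"

definition total_var :: "(real \<Rightarrow> real) \<Rightarrow> real \<Rightarrow> real \<Rightarrow> ereal" where
  "total_var h a b =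
     (SUP p \<in> {(n, t). a < t 0 \<and> (\<forall>i<n. t i < t (Suc i)) \<and> t n = b}.
        ereal (\<Sum>i<fst p. \<bar>h (snd p (Suc i)) - h (snd p i)\<bar>))"

definition sample :: "(nat \<Rightarrow> real) \<Rightarrow> (nat \<Rightarrow> real) \<Rightarrow> nat \<Rightarrow> (real \<times> real) list" where
  "sample x y n = map (\<lambda>i. (x i, y i)) [0..<n]"

definition reg_procedure :: "(nat \<Rightarrow> (real \<times> real) list \<Rightarrow> real \<Rightarrow> real) \<Rightarrow> bool" where
  "reg_procedure phi \<longleftrightarrow> (\<forall>n s. phi n s \<in> borel_measurable borel)"

end

theory Submission
  imports Defs "HOL-Library.Nat_Bijection" "HOL-Real_Asymp.Real_Asymp"
begin


definition F01 :: "real \<Rightarrow> real" where "F01 t = max 0 (min 1 t)"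

lemma emeasure_unif01: "B \<in> sets borel \<Longrightarrow> emeasure unif01 B = emeasure lborel ({0..1} \<inter> B)"
  unfolding unif01_def by (subst emeasure_uniform_measure) (auto simp: divide_ennreal_def)

lemma measure_unif01: "B \<in> sets borel \<Longrightarrow> measure unif01 B = measure lborel ({0..1} \<inter> B)"
  unfolding unif01_def by (subst measure_uniform_measure) auto

lemma sets_unif01[simp, measurable_cong]: "sets unif01 = sets borel"
  and space_unif01[simp]: "space unif01 = UNIV"
  by (auto simp: unif01_def)

lemma finite_measure_unif01: "finite_measure unif01"
proof
  show "emeasure unif01 (space unif01) \<noteq> \<infinity>" by (simp add: emeasure_unif01)
qed

lemma emeasure_unif01_space: "emeasure unif01 UNIV = 1"
  by (simp add: emeasure_unif01)

lemma measure_unif01_Icc: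
  assumes "0 \<le> a" "a \<le> 1"
  shows "measure unif01 ({..t} \<inter> {a..}) = max 0 (F01 t - a)"
proof -
  have "{0..1} \<inter> ({..t} \<inter> {a..}) = {a..min 1 t}" using assms by auto
  thus ?thesis using assms by (simp add: measure_unif01 F01_def)
qed

lemma measure_unif01_le: "measure unif01 {..t} = F01 t"
proof -
  have "{..t} = {..t} \<inter> {0..} \<union> {..t} \<inter> {..<0}" by auto
  have "{0..1} \<inter> {..t} = {0..min 1 t}" by auto
  thus ?thesis by (simp add: measure_unif01 F01_def)
qed

lemma measure_unif01_pt: "measure unif01 {t} = 0"
proof -
  have "{0..1} \<inter> {t} = (if t \<in> {0..1} then {t} else {})" by auto
  thus ?thesis by (simp add: measure_unif01)
qed

lemma nn_integral_unif01_const: "(\<integral>\<^sup>+ u. ennreal c \<partial>unif01) = ennreal c"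
  by (simp add: emeasure_unif01_space)



definition xs :: "nat \<Rightarrow> real" where
  "xs i = (case prod_decode i of (a, b) \<Rightarrow> real a / real (a + b + 1))"

lemma xs_tri: "a \<le> s \<Longrightarrow> xs (triangle s + a) = real a / real (s + 1)"
  by (simp add: xs_def prod_decode_triangle_add prod_decode_aux.simps)

lemma xs_range: "0 \<le> xs i \<and> xs i < 1"
  by (auto simp: xs_def split: prod.splits)

lemma sum_lessThan_add_split:
  fixes f :: "nat \<Rightarrow> 'a::comm_monoid_add" and m k :: nat
  shows "(\<Sum>i<m+k. f i) = (\<Sum>i<m. f i) + (\<Sum>j<k. f (m + j))"
  by (induction k) (auto simp: ac_simps)

lemma count_le:
  assumes "0 \<le> c"
  shows "(\<Sum>a<r. if real a \<le> c then 1 else 0 :: real) = real (min r (nat \<lfloor>c\<rfloor> + 1))"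
proof -
  have h: "(real x \<le> c) = (x < Suc (nat \<lfloor>c\<rfloor>))" for x
  proof -
    have "(real x \<le> c) = (int x \<le> \<lfloor>c\<rfloor>)" by (simp add: le_floor_iff)
    also have "\<dots> = (x \<le> nat \<lfloor>c\<rfloor>)" using assms by linarith
    finally show ?thesis by (simp add: less_Suc_eq_le)
  qed
  have "{a. a < r \<and> real a \<le> c} = {..<min r (nat \<lfloor>c\<rfloor> + 1)}"
  proof (intro set_eqI)
    fix a
    have "a < r \<and> real a \<le> c \<longleftrightarrow> a < r \<and> a < Suc (nat \<lfloor>c\<rfloor>)" using h[of a] by blast
    thus "a \<in> {a. a < r \<and> real a \<le> c} \<longleftrightarrow> a \<in> {..<min r (nat \<lfloor>c\<rfloor> + 1)}" by simp
  qed
  hence "card {a. a < r \<and> real a \<le> c} = min r (nat \<lfloor>c\<rfloor> + 1)" by simp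
  moreover have "(\<Sum>a<r. if real a \<le> c then 1 else 0 :: real) = real (card {a. a < r \<and> real a \<le> c})"
    by (simp add: sum.If_cases Int_def conj_commute)
  ultimately show ?thesis by simp
qed

definition Sle :: "nat \<Rightarrow> real \<Rightarrow> real" where
  "Sle n u = (\<Sum>i<n. indicator {..u} (xs i))"

lemma block_sum:
  assumes "0 \<le> u" "r \<le> s + 1"
  shows "(\<Sum>j<r. indicator {..u} (xs (triangle s + j)) :: real) = real (min r (nat \<lfloor>u * real (s+1)\<rfloor> + 1))"
proof -
  have "(\<Sum>j<r. indicator {..u} (xs (triangle s + j)) :: real) = (\<Sum>j<r. if real j \<le> u * real (s+1) then 1 else 0)"
    using assms by (intro sum.cong) (auto simp: xs_tri divide_le_eq indicator_def)
  also have "\<dots> = real (min r (nat \<lfloor>u * real (s+1)\<rfloor> + 1))"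
    using assms by (intro count_le) simp
  finally show ?thesis .
qed

lemma block_bounds:
  assumes "0 \<le> u" "u < 1" "r \<le> s + 1"
  shows "real r * u \<le> real (min r (nat \<lfloor>u * real (s+1)\<rfloor> + 1))"
    and "real (min r (nat \<lfloor>u * real (s+1)\<rfloor> + 1)) \<le> real r"
    and "real (min (s+1) (nat \<lfloor>u * real (s+1)\<rfloor> + 1)) \<le> real (s+1) * u + 1"
proof -
  have f0: "0 \<le> \<lfloor>u * real (s+1)\<rfloor>" using assms by simp
  have f1: "real (nat \<lfloor>u * real (s+1)\<rfloor> + 1) = real_of_int \<lfloor>u * real (s+1)\<rfloor> + 1"
    using f0 by simp
  have f2: "u * real (s+1) < real_of_int \<lfloor>u * real (s+1)\<rfloor> + 1" by linarith
  have f3: "real_of_int \<lfloor>u * real (s+1)\<rfloor> \<le> u * real (s+1)" by linarith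
  have "real r * u \<le> real r" using assms by (simp add: mult_left_le)
  moreover have "real r * u \<le> real (nat \<lfloor>u * real (s+1)\<rfloor> + 1)"
  proof -
    have "real r * u \<le> u * real (s+1)" using assms by (simp add: mult.commute mult_left_mono)
    thus ?thesis using f1 f2 by linarith
  qed
  ultimately show "real r * u \<le> real (min r (nat \<lfloor>u * real (s+1)\<rfloor> + 1))" by simp
  show "real (min r (nat \<lfloor>u * real (s+1)\<rfloor> + 1)) \<le> real r" by simp
  have "real (nat \<lfloor>u * real (s+1)\<rfloor> + 1) \<le> real (s+1) * u + 1" using f1 f3 by (simp add: mult.commute)
  thus "real (min (s+1) (nat \<lfloor>u * real (s+1)\<rfloor> + 1)) \<le> real (s+1) * u + 1"
    by linarith
qed

lemma Sle_tri:
  assumes "0 \<le> u" "u < 1"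
  shows "real (triangle s) * u \<le> Sle (triangle s) u \<and> Sle (triangle s) u \<le> real (triangle s) * u + real s"
proof (induction s)
  case 0 thus ?case by (simp add: Sle_def)
next
  case (Suc s)
  have e: "Sle (triangle (Suc s)) u = Sle (triangle s) u + real (min (s+1) (nat \<lfloor>u * real (s+1)\<rfloor> + 1))"
    unfolding Sle_def triangle_Suc using assms
    by (subst sum_lessThan_add_split) (simp add: block_sum[of u "Suc s" s, simplified])
  have b1: "real (s+1) * u \<le> real (min (s+1) (nat \<lfloor>u * real (s+1)\<rfloor> + 1))"
    using block_bounds(1)[OF assms, of "s+1" s] by simp
  have b2: "real (min (s+1) (nat \<lfloor>u * real (s+1)\<rfloor> + 1)) \<le> real (s+1) * u + 1"
    using block_bounds(3)[OF assms, of "s+1" s] by simp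
  have t: "real (triangle (Suc s)) = real (triangle s) + real (s+1)" by simp
  show ?case using Suc b1 b2 e unfolding t by (simp add: algebra_simps)
qed

lemma Sle_bounds01:
  assumes "0 \<le> u" "u < 1"
  shows "real n * u \<le> Sle n u \<and> Sle n u \<le> real n * u + sqrt (8 * real n + 1)"
proof -
  obtain r b where pd: "prod_decode n = (r, b)" by (cases "prod_decode n")
  define s where "s = r + b"
  have n: "n = triangle s + r" using prod_decode_inverse[of n] pd by (simp add: prod_encode_def s_def)
  have rs: "r \<le> s + 1" by (simp add: s_def)
  have e: "Sle n u = Sle (triangle s) u + real (min r (nat \<lfloor>u * real (s+1)\<rfloor> + 1))"
    unfolding Sle_def n using assms rs
    by (subst sum_lessThan_add_split) (simp add: block_sum)
  have b1: "real r * u \<le> real (min r (nat \<lfloor>u * real (s+1)\<rfloor> + 1))"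
    and b2: "real (min r (nat \<lfloor>u * real (s+1)\<rfloor> + 1)) \<le> real r"
    using block_bounds[OF assms rs] by auto
  have T: "real (triangle s) * u \<le> Sle (triangle s) u \<and> Sle (triangle s) u \<le> real (triangle s) * u + real s"
    using Sle_tri[OF assms] .
  have rr: "real r \<le> real r * u + real s + 1"
    using rs assms by (smt (verit) mult_nonneg_nonneg of_nat_0_le_iff of_nat_add of_nat_le_iff s_def)
  have tri2: "2 * real (triangle s) = real s * (real s + 1)"
  proof -
    have "2 * triangle s = s * Suc s" by (simp add: triangle_def)
    hence "real (2 * triangle s) = real (s * Suc s)" by simp
    thus ?thesis by (simp add: algebra_simps)
  qed
  have sq: "(2 * real s + 1)^2 \<le> 8 * real n + 1"
    using tri2 n by (simp add: power2_eq_square algebra_simps)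
  have "2 * real s + 1 \<le> sqrt (8 * real n + 1)"
    using sq by (simp add: real_le_rsqrt)
  moreover have "real n = real (triangle s) + real r" using n by simp
  moreover have "real n * u = real (triangle s) * u + real r * u"
    using \<open>real n = _\<close> by (simp add: algebra_simps)
  ultimately show ?thesis using e b1 b2 T rr by linarith
qed

definition R :: "nat \<Rightarrow> real" where "R n = sqrt (8 * real n + 1)"

lemma R_nonneg: "0 \<le> R n" by (simp add: R_def)

lemma xs_le: "1 \<le> u \<Longrightarrow> xs i \<le> u"
  using xs_range[of i] by linarith

lemma xs_lt: "1 \<le> u \<Longrightarrow> xs i < u"
  using xs_range[of i] by linarith

lemma xs_gt: "u < 0 \<Longrightarrow> \<not> xs i \<le> u"
  using xs_range[of i] by linarith

lemma Sle_lower: "real n * F01 u \<le> Sle n u"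
proof (cases "u < 0")
  case True thus ?thesis by (simp add: F01_def Sle_def sum_nonneg)
next
  case False
  show ?thesis
  proof (cases "u < 1")
    case True thus ?thesis using Sle_bounds01[of u n] False by (simp add: F01_def)
  next
    case f: False
    have "Sle n u = real n" unfolding Sle_def using f
      by (simp add: indicator_def xs_le)
    thus ?thesis using f by (simp add: F01_def)
  qed
qed

lemma Sle_upper: "Sle n u \<le> real n * F01 u + R n"
proof (cases "u < 0")
  case True
  have "Sle n u = 0" unfolding Sle_def using True
    by (simp add: indicator_def xs_gt)
  thus ?thesis using True by (simp add: F01_def R_def)
next
  case False
  show ?thesis
  proof (cases "u < 1")
    case True thus ?thesis using Sle_bounds01[of u n] False by (simp add: F01_def R_def)
  next
    case f: False
    have "Sle n u = real n" unfolding Sle_def using f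
      by (simp add: indicator_def xs_le)
    thus ?thesis using f by (simp add: F01_def R_def)
  qed
qed

definition Slt :: "nat \<Rightarrow> real \<Rightarrow> real" where
  "Slt n u = (\<Sum>i<n. indicator {..<u} (xs i))"

lemma Slt_le_Sle: "Slt n u \<le> Sle n u"
  unfolding Slt_def Sle_def by (intro sum_mono) (auto simp: indicator_def)

lemma Sle_le_Slt: "v < u \<Longrightarrow> Sle n v \<le> Slt n u"
  unfolding Slt_def Sle_def by (intro sum_mono) (auto simp: indicator_def)

lemma Slt_lower: "real n * F01 u \<le> Slt n u"
proof (cases "u \<le> 0")
  case True thus ?thesis by (simp add: F01_def Slt_def sum_nonneg)
next
  case False
  show ?thesis
  proof (cases "u \<le> 1")
    case True
    have "real n * u \<le> Slt n u"
    proof (cases "n = 0")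
      case True thus ?thesis by (simp add: Slt_def)
    next
      case n0: False
      have "u \<le> Slt n u / real n"
      proof (rule dense_le_bounded[of 0 u])
        show "0 < u" using False by simp
        fix w assume "0 < w" "w < u"
        have "real n * w \<le> Sle n w" using Sle_lower[of n w] \<open>0<w\<close> \<open>w<u\<close> True
          by (simp add: F01_def)
        also have "\<dots> \<le> Slt n u" using Sle_le_Slt[OF \<open>w<u\<close>] .
        finally show "w \<le> Slt n u / real n" using n0 by (simp add: field_simps)
      qed
      thus ?thesis using n0 by (simp add: field_simps)
    qed
    thus ?thesis using True False by (simp add: F01_def)
  next
    case f: False
    have "Slt n u = real n" unfolding Slt_def using f
      by (simp add: indicator_def xs_lt)
    thus ?thesis using f by (simp add: F01_def)
  qed
qed

definition Ival :: "nat \<Rightarrow> real \<Rightarrow> real \<Rightarrow> real" where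
  "Ival n t a = (\<Sum>i<n. indicator ({..t} \<inter> {a..}) (xs i))"

lemma Ival_bound:
  assumes "0 \<le> a" "a \<le> 1"
  shows "\<bar>Ival n t a - real n * max 0 (F01 t - a)\<bar> \<le> R n"
proof (cases "t < a")
  case True
  have "Ival n t a = 0" unfolding Ival_def using True by (intro sum.neutral) auto
  moreover have "F01 t \<le> a" using True assms by (auto simp: F01_def)
  ultimately show ?thesis by (simp add: R_nonneg)
next
  case False
  have "Ival n t a = Sle n t - Slt n a"
    unfolding Ival_def Sle_def Slt_def sum_subtractf[symmetric] using False
    by (intro sum.cong) (auto simp: indicator_def)
  moreover have "F01 a = a" using assms by (simp add: F01_def)
  moreover have "F01 a \<le> F01 t" using False by (simp add: F01_def)
  moreover note Sle_upper[of n t] Sle_lower[of n t] Slt_lower[of n a] Slt_le_Sle[of n a] Sle_upper[of n a]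
  ultimately show ?thesis by (simp add: algebra_simps abs_le_iff)
qed

lemma atom_bound: "(\<Sum>i<n. indicator {t} (xs i) :: real) \<le> R n"
proof (cases "0 \<le> t \<and> t < 1")
  case True
  have "(\<Sum>i<n. indicator {t} (xs i) :: real) = Sle n t - Slt n t"
    unfolding Sle_def Slt_def sum_subtractf[symmetric]
    by (intro sum.cong) (auto simp: indicator_def)
  moreover have "F01 t = t" using True by (simp add: F01_def)
  ultimately show ?thesis using Sle_upper[of n t] Slt_lower[of n t] by simp
next
  case False
  have "xs i \<noteq> t" for i using False xs_range[of i] by auto
  hence "(\<Sum>i<n. indicator {t} (xs i) :: real) = 0"
    by (intro sum.neutral) (auto simp: indicator_def)
  thus ?thesis by (simp add: R_nonneg)
qed

lemma atom_nonneg: "0 \<le> (\<Sum>i<n. indicator {t} (xs i) :: real)"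
  by (simp add: sum_nonneg)



definition lo :: "nat \<Rightarrow> nat \<Rightarrow> real" where "lo s j = real j / 2^s"
definition hi :: "nat \<Rightarrow> nat \<Rightarrow> real" where "hi s j = (2 * real j + 1) / 2^(s+1)"

definition mk :: "nat \<Rightarrow> real \<Rightarrow> real" where
  "mk s u = (\<Sum>j<2^s. indicator {lo s j..} u - indicator {hi s j..} u)"

lemma lo_hi: "lo s j < hi s j" "hi s j < lo s (Suc j)"
  by (auto simp: lo_def hi_def field_simps)

lemma lo_hi_range: "j < 2^s \<Longrightarrow> 0 \<le> lo s j \<and> lo s j \<le> 1 \<and> 0 \<le> hi s j \<and> hi s j \<le> 1"
proof -
  assume j: "j < 2^s"
  hence "real j + 1 \<le> 2^s"
    by (metis Suc_leI of_nat_Suc of_nat_le_iff of_nat_numeral of_nat_power add.commute)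
  moreover have "j \<le> 2^s" using j by simp
  ultimately show ?thesis by (auto simp: lo_def hi_def field_simps)
qed

lemma mk_partial:
  "(\<Sum>j<J. indicator {lo s j..} u - indicator {hi s j..} u :: real) \<in> {0,1} \<and>
   (lo s J \<le> u \<longrightarrow> (\<Sum>j<J. indicator {lo s j..} u - indicator {hi s j..} u :: real) = 0)"
proof (induction J)
  case 0 thus ?case by simp
next
  case (Suc J)
  note lh = lo_hi[of s J]
  show ?case
  proof (cases "u < lo s J")
    case True
    have "lo s (Suc J) > u" using True lh by linarith
    thus ?thesis using Suc True lh by (auto simp: indicator_def)
  next
    case False
    hence z: "(\<Sum>j<J. indicator {lo s j..} u - indicator {hi s j..} u :: real) = 0" using Suc by simp
    show ?thesis using z False lh by (auto simp: indicator_def)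
  qed
qed

lemma mk_01: "mk s u \<in> {0, 1}"
  unfolding mk_def using mk_partial by blast

lemma mk_meas[measurable]: "mk s \<in> borel_measurable borel"
  unfolding mk_def by measurable

lemma mk_integrable: "integrable unif01 (mk s)"
proof -
  interpret finite_measure unif01 by (rule finite_measure_unif01)
  show ?thesis
  proof (rule integrable_const_bound[where B=1])
    have "\<bar>mk s x\<bar> \<le> 1" for x using mk_01[of s x] by auto
    thus "AE x in unif01. norm (mk s x) \<le> 1" by auto
  qed simp
qed

lemma tv_bound:
  fixes f g h :: "real \<Rightarrow> real"
  assumes "\<And>x y. x \<le> y \<Longrightarrow> f x \<le> f y" "\<And>x y. x \<le> y \<Longrightarrow> g x \<le> g y"
    and "\<And>x. 0 \<le> f x \<and> f x \<le> B" "\<And>x. 0 \<le> g x \<and> g x \<le> C"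
    and "\<And>x. h x = f x - g x"
  shows "total_var h a b \<le> ereal (B + C)"
  unfolding total_var_def
proof (rule SUP_least, clarsimp)
  fix n and t :: "nat \<Rightarrow> real"
  assume inc: "\<forall>i<n. t i < t (Suc i)"
  have "(\<Sum>i<n. \<bar>h (t (Suc i)) - h (t i)\<bar>) \<le> (\<Sum>i<n. (f (t (Suc i)) - f (t i)) + (g (t (Suc i)) - g (t i)))"
  proof (intro sum_mono)
    fix i assume "i \<in> {..<n}"
    hence "t i \<le> t (Suc i)" using inc by (simp add: less_imp_le)
    hence "f (t i) \<le> f (t (Suc i))" "g (t i) \<le> g (t (Suc i))" using assms(1,2) by auto
    thus "\<bar>h (t (Suc i)) - h (t i)\<bar> \<le> (f (t (Suc i)) - f (t i)) + (g (t (Suc i)) - g (t i))"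
      using assms(5) by (simp add: abs_le_iff)
  qed
  also have "\<dots> = (f (t n) - f (t 0)) + (g (t n) - g (t 0))"
    by (simp add: sum.distrib sum_lessThan_telescope[where f="\<lambda>i. f (t i)"] sum_lessThan_telescope[where f="\<lambda>i. g (t i)"])
  also have "\<dots> \<le> B + C" using assms(3)[of "t n"] assms(3)[of "t 0"] assms(4)[of "t n"] assms(4)[of "t 0"] by linarith
  finally show "(\<Sum>i<n. \<bar>h (t (Suc i)) - h (t i)\<bar>) \<le> B + C" .
qed

lemma mk_tv: "total_var (mk s) 0 1 < \<infinity>"
proof -
  have "total_var (mk s) 0 1 \<le> ereal (2^s + 2^s)"
  proof (rule tv_bound[where f="\<lambda>u. \<Sum>j<2^s. indicator {lo s j..} u" and g="\<lambda>u. \<Sum>j<2^s. indicator {hi s j..} u"])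
    show "\<And>x y. x \<le> y \<Longrightarrow> (\<Sum>j<2^s. indicator {lo s j..} x) \<le> (\<Sum>j<2^s. indicator {lo s j..} y :: real)"
      by (intro sum_mono) (auto simp: indicator_def)
    show "\<And>x y. x \<le> y \<Longrightarrow> (\<Sum>j<2^s. indicator {hi s j..} x) \<le> (\<Sum>j<2^s. indicator {hi s j..} y :: real)"
      by (intro sum_mono) (auto simp: indicator_def)
    show "0 \<le> (\<Sum>j<2^s. indicator {lo s j..} x :: real) \<and> (\<Sum>j<2^s. indicator {lo s j..} x :: real) \<le> 2^s" for x
      using sum_bounded_above[of "{..<(2::nat)^s}" "\<lambda>j. indicator {lo s j..} x :: real" 1]
      by (auto simp: sum_nonneg indicator_def)
    show "0 \<le> (\<Sum>j<2^s. indicator {hi s j..} x :: real) \<and> (\<Sum>j<2^s. indicator {hi s j..} x :: real) \<le> 2^s" for x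
      using sum_bounded_above[of "{..<(2::nat)^s}" "\<lambda>j. indicator {hi s j..} x :: real" 1]
      by (auto simp: sum_nonneg indicator_def)
    show "mk s x = (\<Sum>j<2^s. indicator {lo s j..} x) - (\<Sum>j<2^s. indicator {hi s j..} x)" for x
      by (simp add: mk_def sum_subtractf)
  qed
  moreover have "ereal (2^s + 2^s) < \<infinity>" by simp
  ultimately show ?thesis by (rule le_less_trans)
qed

lemma reg_nu_mk:
  assumes A: "A \<in> sets borel"
  shows "reg_nu unif01 (mk s) A = (\<Sum>j<2^s. measure unif01 (A \<inter> {lo s j..}) - measure unif01 (A \<inter> {hi s j..}))"
proof -
  have fin: "emeasure unif01 B < \<infinity>" for B
    using finite_measure.emeasure_finite[OF finite_measure_unif01] by (simp add: top.not_eq_extremum)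
  have e: "indicator A u *\<^sub>R mk s u = (\<Sum>j<2^s. indicator (A \<inter> {lo s j..}) u - indicator (A \<inter> {hi s j..}) u)" for u
    by (simp add: mk_def sum_distrib_left indicator_inter_arith algebra_simps)
  have "reg_nu unif01 (mk s) A = integral\<^sup>L unif01 (\<lambda>u. \<Sum>j<2^s. indicator (A \<inter> {lo s j..}) u - indicator (A \<inter> {hi s j..}) u :: real)"
    unfolding reg_nu_def set_lebesgue_integral_def e ..
  also have "\<dots> = (\<Sum>j<2^s. measure unif01 (A \<inter> {lo s j..}) - measure unif01 (A \<inter> {hi s j..}))"
  proof -
    have int: "integrable unif01 (indicator (A \<inter> {c..}) :: real \<Rightarrow> real)" for c
      using A fin by (intro integrable_real_indicator) auto
    have "integral\<^sup>L unif01 (\<lambda>u. \<Sum>j<2^s. indicator (A \<inter> {lo s j..}) u - indicator (A \<inter> {hi s j..}) u :: real)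
        = (\<Sum>j<2^s. integral\<^sup>L unif01 (\<lambda>u. indicator (A \<inter> {lo s j..}) u - indicator (A \<inter> {hi s j..}) u :: real))"
      by (rule Bochner_Integration.integral_sum) (auto intro!: integrable_diff int)
    also have "\<dots> = (\<Sum>j<2^s. measure unif01 (A \<inter> {lo s j..}) - measure unif01 (A \<inter> {hi s j..}))"
      by (intro sum.cong refl) (simp add: Bochner_Integration.integral_diff[OF int int])
    finally show ?thesis .
  qed
  finally show ?thesis .
qed

lemma reg_nu_half:
  assumes A: "A \<in> sets borel"
  shows "reg_nu unif01 (\<lambda>_. 1/2) A = measure unif01 A / 2"
proof -
  have "emeasure unif01 A \<noteq> \<infinity>"
    using finite_measure.emeasure_finite[OF finite_measure_unif01] by simp
  thus ?thesis unfolding reg_nu_def using A by (subst set_integral_const) auto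
qed

definition cc :: "nat \<Rightarrow> real \<Rightarrow> real" where
  "cc s v = (\<Sum>j<2^s. max 0 (v - lo s j) - max 0 (v - hi s j))"

lemma reg_nu_mk_le: "reg_nu unif01 (mk s) {..t} = cc s (F01 t)"
  unfolding reg_nu_mk[OF borel_closed[OF closed_atMost]] cc_def
  by (intro sum.cong refl) (simp add: measure_unif01_Icc lo_hi_range)

lemma reg_nu_mk_pt: "reg_nu unif01 (mk s) {t} = 0"
proof -
  have "measure unif01 ({t} \<inter> {c..}) = 0" for c
    by (cases "c \<le> t") (auto simp: measure_unif01_pt)
  thus ?thesis by (simp add: reg_nu_mk)
qed

lemma reg_nu_half_le: "reg_nu unif01 (\<lambda>_. 1/2) {..t} = F01 t / 2"
  by (simp add: reg_nu_half measure_unif01_le)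

lemma reg_nu_half_pt: "reg_nu unif01 (\<lambda>_. 1/2) {t} = 0"
  by (simp add: reg_nu_half measure_unif01_pt)

lemma cc_mono: "v \<le> w \<Longrightarrow> cc s v \<le> cc s w"
  unfolding cc_def
proof (intro sum_mono)
  fix j assume "v \<le> w"
  thus "max 0 (v - lo s j) - max 0 (v - hi s j) \<le> max 0 (w - lo s j) - max 0 (w - hi s j)"
    using lo_hi(1)[of s j] by (auto simp: max_def)
qed

lemma cc_grid:
  assumes "J \<le> 2^s"
  shows "cc s (real J / 2^s) = real J / 2^(s+1)"
proof -
  have "cc s (real J / 2^s) = (\<Sum>j<2^s. if j < J then 1 / 2^(s+1) else 0)"
    unfolding cc_def
  proof (intro sum.cong refl)
    fix j assume "j \<in> {..<(2::nat)^s}"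
    show "max 0 (real J / 2^s - lo s j) - max 0 (real J / 2^s - hi s j) = (if j < J then 1 / 2^(s+1) else 0)"
    proof (cases "j < J")
      case True
      hence "real j + 1 \<le> real J" by linarith
      have h1: "hi s j = (real j + 1/2) / 2^s" by (simp add: hi_def field_simps)
      have "hi s j \<le> real J / 2^s" unfolding h1 using \<open>real j + 1 \<le> real J\<close>
        by (intro divide_right_mono) auto
      moreover have "lo s j \<le> real J / 2^s" unfolding lo_def using \<open>real j + 1 \<le> real J\<close>
        by (intro divide_right_mono) auto
      ultimately have "hi s j \<le> real J / 2^s" "lo s j \<le> real J / 2^s" by auto
      thus ?thesis using True by (simp add: hi_def lo_def field_simps)
    next
      case False
      hence "real J \<le> real j" by simp
      hence "real J / 2^s \<le> lo s j" by (auto simp: lo_def field_simps)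
      thus ?thesis using False lo_hi(1)[of s j] by simp
    qed
  qed
  also have "\<dots> = real (card ({..<(2::nat)^s} \<inter> {j. j<J})) / 2^(s+1)"
    by (simp add: sum.If_cases)
  also have "{..<(2::nat)^s} \<inter> {j. j<J} = {..<J}" using assms by auto
  finally show ?thesis by simp
qed

lemma cc_approx:
  assumes "0 \<le> v" "v \<le> 1"
  shows "\<bar>cc s v - v / 2\<bar> \<le> 1 / 2^s"
proof (cases "v = 1")
  case True
  have "cc s (real ((2::nat)^s) / 2^s) = real ((2::nat)^s) / 2^(s+1)" by (rule cc_grid) simp
  hence "cc s 1 * 2 = 1" by simp
  hence c1: "cc s 1 = 1/2" by linarith
  have e0: "\<bar>cc s v - v/2\<bar> = 0" unfolding True c1 by simp
  have "0 \<le> 1 / (2::real)^s" by simp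
  thus ?thesis unfolding e0 .
next
  case False
  define J where "J = nat \<lfloor>v * 2^s\<rfloor>"
  have rJ: "real J = of_int \<lfloor>v * 2^s\<rfloor>" using assms by (simp add: J_def)
  have fl1: "real J \<le> v * 2^s" unfolding rJ by (rule of_int_floor_le)
  have fl2: "v * 2^s < real J + 1" unfolding rJ by (rule real_of_int_floor_add_one_gt)
  have "v * 2^s < 2^s" using assms False by simp
  hence "real J < 2^s" using fl1 by linarith
  hence "J < 2^s" by (metis of_nat_less_iff of_nat_numeral of_nat_power)
  hence J1: "Suc J \<le> 2^s" by simp
  have J0: "J \<le> 2^s" using J1 by simp
  define a where "a = real J / 2^s"
  have e1: "real (Suc J) / 2^s = a + 1 / 2^s" by (simp add: a_def add_divide_distrib)
  have e2: "real J / 2^(s+1) = a / 2" by (simp add: a_def)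
  have e3: "real (Suc J) / 2^(s+1) = a / 2 + 1 / 2^s / 2" by (simp add: a_def add_divide_distrib)
  have a: "a \<le> v" using fl1 by (simp add: a_def divide_le_eq)
  have b: "v \<le> a + 1 / 2^s" using fl2 by (simp add: a_def le_divide_eq add_divide_distrib[symmetric])
  have "cc s (real J / 2^s) \<le> cc s v" "cc s v \<le> cc s (real (Suc J) / 2^s)"
    using cc_mono a b e1 by (auto simp: a_def)
  hence "a / 2 \<le> cc s v" "cc s v \<le> a / 2 + 1 / 2^s / 2"
    using cc_grid[OF J0] cc_grid[OF J1] e2 e3 by auto
  moreover have "0 \<le> 1 / (2::real)^s" by simp
  ultimately show ?thesis using a b by (simp add: abs_le_iff)
qed

lemma cc_lim: "(\<lambda>s. cc s (F01 t)) \<longlonglongrightarrow> F01 t / 2"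
proof -
  have F: "0 \<le> F01 t" "F01 t \<le> 1" by (auto simp: F01_def)
  have z: "(\<lambda>s. 1 / 2^s :: real) \<longlonglongrightarrow> 0"
    by (simp add: LIMSEQ_inverse_realpow_zero divide_inverse)
  have l: "(\<lambda>s. F01 t / 2 - 1/2^s) \<longlonglongrightarrow> F01 t / 2 - 0"
    by (intro tendsto_diff tendsto_const z)
  have u: "(\<lambda>s. F01 t / 2 + 1/2^s) \<longlonglongrightarrow> F01 t / 2 + 0"
    by (intro tendsto_add tendsto_const z)
  have b: "F01 t / 2 - 1/2^s \<le> cc s (F01 t) \<and> cc s (F01 t) \<le> F01 t/2 + 1/2^s" for s
    using cc_approx[OF F, of s] unfolding abs_le_iff by linarith
  show ?thesis
  proof (rule tendsto_sandwich[OF _ _ l[simplified] u[simplified]])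
    show "\<forall>\<^sub>F s in sequentially. F01 t / 2 - 1 / 2 ^ s \<le> cc s (F01 t)"
      using b by (intro always_eventually allI) blast
    show "\<forall>\<^sub>F s in sequentially. cc s (F01 t) \<le> F01 t / 2 + 1 / 2 ^ s"
      using b by (intro always_eventually allI) blast
  qed
qed



lemma cesaro:
  fixes a :: "nat \<Rightarrow> real"
  assumes "a \<longlonglongrightarrow> L"
  shows "(\<lambda>n. (\<Sum>i<n. a i) / real n) \<longlonglongrightarrow> L"
proof (rule LIMSEQ_I)
  fix e :: real assume e: "0 < e"
  obtain N where N: "\<And>i. i \<ge> N \<Longrightarrow> norm (a i - L) < e/2"
    using LIMSEQ_D[OF assms, of "e/2"] e by auto
  define C where "C = (\<Sum>i<N. \<bar>a i - L\<bar>)"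
  have C0: "0 \<le> C" by (simp add: C_def sum_nonneg)
  obtain M :: nat where M: "M > 2 * C / e" using reals_Archimedean2 by blast
  show "\<exists>no. \<forall>n\<ge>no. norm ((\<Sum>i<n. a i) / real n - L) < e"
  proof (intro exI allI impI)
    fix n assume n: "n \<ge> max (Suc N) M"
    hence n0: "real n > 0" and nN: "N \<le> n" by auto
    have "(\<Sum>i<n. a i) / real n - L = (\<Sum>i<n. a i - L) / real n"
      using n0 by (simp add: sum_subtractf field_simps)
    moreover have "\<bar>\<Sum>i<n. a i - L\<bar> < e / 2 * real n + e / 2 * real n"
    proof -
      have split: "(\<Sum>i<n. a i - L) = (\<Sum>i<N. a i - L) + (\<Sum>j<n - N. a (N + j) - L)"
        using sum_lessThan_add_split[of "\<lambda>i. a i - L" N "n - N"] nN by simp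
      have "\<bar>\<Sum>i<N. a i - L\<bar> \<le> C" unfolding C_def by (rule sum_abs)
      also have "C < e / 2 * real n"
      proof -
        have "2 * C / e < real n" using M n by linarith
        thus ?thesis using e by (simp add: field_simps)
      qed
      finally have p1: "\<bar>\<Sum>i<N. a i - L\<bar> < e / 2 * real n" .
      have "\<bar>\<Sum>j<n - N. a (N + j) - L\<bar> \<le> (\<Sum>j<n - N. \<bar>a (N + j) - L\<bar>)" by (rule sum_abs)
      also have "\<dots> \<le> (\<Sum>j<n - N. e / 2)"
        using N by (intro sum_mono) (simp add: less_imp_le)
      also have "\<dots> = real (n - N) * (e / 2)" by simp
      also have "\<dots> \<le> e / 2 * real n" using e by (simp add: mult.commute)
      finally have p2: "\<bar>\<Sum>j<n - N. a (N + j) - L\<bar> \<le> e / 2 * real n" .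
      show ?thesis unfolding split using p1 p2 by linarith
    qed
    ultimately show "norm ((\<Sum>i<n. a i) / real n - L) < e"
      using n0 by (simp add: abs_divide field_simps)
  qed
qed

definition Fs :: "nat \<Rightarrow> nat \<Rightarrow> real \<Rightarrow> real" where
  "Fs s m t = (\<Sum>i<m. mk s (xs i) * indicator {..t} (xs i))"

definition D :: "nat \<Rightarrow> nat \<Rightarrow> real \<Rightarrow> real" where
  "D s m t = Fs s m t - real m * cc s (F01 t)"

lemma D_bound: "\<bar>D s m t\<bar> \<le> 2^(s+1) * R m"
proof -
  have e: "mk s u * indicator {..t} u = (\<Sum>j<2^s. indicator ({..t} \<inter> {lo s j..}) u - indicator ({..t} \<inter> {hi s j..}) u)" for u
    by (simp add: mk_def sum_distrib_right sum_distrib_left right_diff_distrib indicator_inter_arith algebra_simps)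
  have "Fs s m t = (\<Sum>j<2^s. Ival m t (lo s j) - Ival m t (hi s j))"
    unfolding Fs_def e Ival_def by (subst sum.swap) (simp add: sum_subtractf)
  hence "D s m t = (\<Sum>j<2^s. (Ival m t (lo s j) - Ival m t (hi s j)) - real m * (max 0 (F01 t - lo s j) - max 0 (F01 t - hi s j)))"
    unfolding D_def cc_def by (simp only: sum_distrib_left sum_subtractf[symmetric])
  also have "\<dots> = (\<Sum>j<2^s. (Ival m t (lo s j) - real m * max 0 (F01 t - lo s j)) - (Ival m t (hi s j) - real m * max 0 (F01 t - hi s j)))"
    by (intro sum.cong refl) (simp add: algebra_simps)
  also have "\<bar>\<dots>\<bar> \<le> (\<Sum>j<(2::nat)^s. 2 * R m)"
  proof (rule order.trans[OF sum_abs], intro sum_mono)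
    fix j assume "j \<in> {..<(2::nat)^s}"
    hence r: "0 \<le> lo s j" "lo s j \<le> 1" "0 \<le> hi s j" "hi s j \<le> 1" using lo_hi_range by auto
    show "\<bar>(Ival m t (lo s j) - real m * max 0 (F01 t - lo s j)) - (Ival m t (hi s j) - real m * max 0 (F01 t - hi s j))\<bar> \<le> 2 * R m"
      using Ival_bound[OF r(1,2), of m t] Ival_bound[OF r(3,4), of m t] by linarith
  qed
  also have "\<dots> = 2^(s+1) * R m" by simp
  finally show ?thesis .
qed

definition Yk :: "(nat \<Rightarrow> nat) \<Rightarrow> nat \<Rightarrow> real" where
  "Yk \<kappa> i = mk (\<kappa> i) (xs i)"

definition Aerr :: "(nat \<Rightarrow> nat) \<Rightarrow> nat \<Rightarrow> real \<Rightarrow> real" where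
  "Aerr \<kappa> n t = (\<Sum>i<n. Yk \<kappa> i * indicator {..t} (xs i) - cc (\<kappa> i) (F01 t))"

lemma R_mono: "m \<le> n \<Longrightarrow> R m \<le> R n"
  by (simp add: R_def)

lemma Aerr_tele:
  assumes mono: "\<And>i j. i \<le> j \<Longrightarrow> \<kappa> i \<le> \<kappa> j"
  shows "\<bar>Aerr \<kappa> n t - D (\<kappa> n) n t\<bar> \<le> 2 * real (\<kappa> n - \<kappa> 0) * (2^(\<kappa> n + 1) * R n)"
proof (induction n)
  case 0 thus ?case by (simp add: Aerr_def D_def Fs_def)
next
  case (Suc n)
  have step: "Aerr \<kappa> (Suc n) t = Aerr \<kappa> n t + (D (\<kappa> n) (Suc n) t - D (\<kappa> n) n t)"
    by (simp add: Aerr_def D_def Fs_def Yk_def algebra_simps)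
  have kn: "\<kappa> n \<le> \<kappa> (Suc n)" "\<kappa> 0 \<le> \<kappa> n" using mono by auto
  have Rm: "R n \<le> R (Suc n)" by (rule R_mono) simp
  have pm: "(2::real)^(\<kappa> n + 1) \<le> 2^(\<kappa> (Suc n) + 1)" using kn by (intro power_increasing) auto
  have Rn: "0 \<le> R n" by (rule R_nonneg)
  define B where "B = (2::real)^(\<kappa> (Suc n) + 1) * R (Suc n)"
  have Bmono: "(2::real)^(\<kappa> n + 1) * R n \<le> B"
    unfolding B_def using pm Rm Rn by (intro mult_mono) auto
  have IH': "\<bar>Aerr \<kappa> n t - D (\<kappa> n) n t\<bar> \<le> 2 * real (\<kappa> n - \<kappa> 0) * B"
  proof -
    have "2 * real (\<kappa> n - \<kappa> 0) * ((2::real)^(\<kappa> n + 1) * R n) \<le> 2 * real (\<kappa> n - \<kappa> 0) * B"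
      using Bmono by (intro mult_left_mono) auto
    thus ?thesis using Suc.IH by linarith
  qed
  show ?case
  proof (cases "\<kappa> (Suc n) = \<kappa> n")
    case True
    have "Aerr \<kappa> (Suc n) t - D (\<kappa> (Suc n)) (Suc n) t = Aerr \<kappa> n t - D (\<kappa> n) n t"
      using step True by simp
    thus ?thesis using IH' True by (simp add: B_def)
  next
    case False
    hence lt: "\<kappa> n < \<kappa> (Suc n)" using kn by simp
    have d1: "\<bar>D (\<kappa> n) (Suc n) t\<bar> \<le> B"
      using D_bound[of "\<kappa> n" "Suc n" t] pm R_nonneg[of "Suc n"] unfolding B_def
      by (meson mult_right_mono order.trans)
    have d2: "\<bar>D (\<kappa> (Suc n)) (Suc n) t\<bar> \<le> B" using D_bound unfolding B_def by simp
    have eq: "Aerr \<kappa> (Suc n) t - D (\<kappa> (Suc n)) (Suc n) t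
       = (Aerr \<kappa> n t - D (\<kappa> n) n t) + D (\<kappa> n) (Suc n) t - D (\<kappa> (Suc n)) (Suc n) t"
      using step by simp
    have "real (\<kappa> (Suc n) - \<kappa> 0) \<ge> real (\<kappa> n - \<kappa> 0) + 1" using lt kn by linarith
    moreover have B0: "0 \<le> B" using R_nonneg[of "Suc n"] unfolding B_def by simp
    ultimately have "2 * (real (\<kappa> n - \<kappa> 0) + 1) * B \<le> 2 * real (\<kappa> (Suc n) - \<kappa> 0) * B"
      by (intro mult_right_mono) auto
    hence "2 * real (\<kappa> n - \<kappa> 0) * B + 2 * B \<le> 2 * real (\<kappa> (Suc n) - \<kappa> 0) * B"
      by (simp add: algebra_simps)
    thus ?thesis unfolding eq B_def[symmetric] using IH' d1 d2 by linarith
  qed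
qed

lemma two_k: "2 * real k + 1 \<le> 2^(k+1)"
proof (induction k)
  case 0 thus ?case by simp
next
  case (Suc k)
  have h: "(2::real) \<le> 2^(k+1)" by simp
  have e1: "2 * real (Suc k) + 1 = (2 * real k + 1) + 2" by simp
  have e2: "(2::real)^(Suc k + 1) = 2^(k+1) + 2^(k+1)" by simp
  show ?case unfolding e1 e2 using Suc.IH h by linarith
qed

lemma Aerr_bound:
  assumes mono: "\<And>i j. i \<le> j \<Longrightarrow> \<kappa> i \<le> \<kappa> j"
    and growth: "\<And>i. 256^(\<kappa> i) \<le> i + 1"
  shows "\<bar>Aerr \<kappa> n t\<bar> \<le> 4 * (real n + 1) powr (1/4) * R n"
proof -
  let ?k = "\<kappa> n"
  have "\<bar>Aerr \<kappa> n t\<bar> \<le> \<bar>Aerr \<kappa> n t - D ?k n t\<bar> + \<bar>D ?k n t\<bar>" by linarith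
  also have "\<dots> \<le> 2 * real (?k - \<kappa> 0) * (2^(?k + 1) * R n) + 2^(?k+1) * R n"
    using Aerr_tele[OF mono] D_bound by (intro add_mono) auto
  also have "\<dots> \<le> (2 * real ?k + 1) * (2^(?k + 1) * R n)"
  proof -
    have X0: "0 \<le> (2::real)^(?k + 1) * R n" using R_nonneg[of n] by simp
    have "2 * real (?k - \<kappa> 0) * (2^(?k + 1) * R n) \<le> 2 * real ?k * (2^(?k + 1) * R n)"
      using X0 by (intro mult_right_mono) auto
    thus ?thesis by (simp add: distrib_right)
  qed
  also have "\<dots> \<le> 2^(?k+1) * (2^(?k + 1) * R n)"
    using two_k[of ?k] R_nonneg[of n] by (intro mult_right_mono) auto
  also have "\<dots> = 4 * 4^?k * R n" by (simp add: power_mult_distrib[symmetric] algebra_simps)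
  also have "\<dots> \<le> 4 * (real n + 1) powr (1/4) * R n"
  proof -
    have "(256::real)^?k \<le> real n + 1" using growth[of n]
      by (metis of_nat_1 of_nat_add of_nat_le_iff of_nat_numeral of_nat_power)
    moreover have "(256::real)^?k = (4^?k) powr 4"
    proof -
      have "(256::real)^?k = (4^4)^?k" by simp
      also have "\<dots> = (4^?k)^4" by (simp only: power_mult[symmetric] mult.commute)
      also have "\<dots> = (4^?k) powr 4" by (simp add: powr_realpow)
      finally show ?thesis .
    qed
    ultimately have "(4^?k) powr 4 \<le> real n + 1" by simp
    hence "(((4::real)^?k) powr 4) powr (1/4) \<le> (real n + 1) powr (1/4)"
      by (intro powr_mono2) auto
    moreover have "(((4::real)^?k) powr 4) powr (1/4) = 4^?k"
      by (subst powr_powr) simp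
    ultimately have "(4::real)^?k \<le> (real n + 1) powr (1/4)"
      by simp
    thus ?thesis using R_nonneg[of n] by (intro mult_right_mono) auto
  qed
  finally show ?thesis .
qed

lemma lim_err: "(\<lambda>n. 4 * (real n + 1) powr (1/4) * sqrt (8 * real n + 1) / real n) \<longlonglongrightarrow> 0"
  by real_asymp

lemma lim_R: "(\<lambda>n. sqrt (8 * real n + 1) / real n) \<longlonglongrightarrow> 0"
  by real_asymp



lemma Yk_01: "Yk \<kappa> i \<in> {0, 1}"
  unfolding Yk_def by (rule mk_01)

lemma emp_mu_le_lim: "(\<lambda>n. emp_mu xs n {..t}) \<longlonglongrightarrow> measure unif01 {..t}"
proof -
  have e: "emp_mu xs n {..t} = Sle n t / real n" for n by (simp add: emp_mu_def Sle_def)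
  have l: "(\<lambda>n. F01 t + R n / real n) \<longlonglongrightarrow> F01 t + 0"
    by (intro tendsto_add tendsto_const) (simp add: R_def lim_R)
  show ?thesis unfolding e measure_unif01_le
  proof (rule tendsto_sandwich[OF _ _ tendsto_const l[simplified]])
    show "\<forall>\<^sub>F n in sequentially. F01 t \<le> Sle n t / real n"
      using eventually_gt_at_top[of 0]
      by eventually_elim (use Sle_lower in \<open>simp add: field_simps mult.commute\<close>)
    show "\<forall>\<^sub>F n in sequentially. Sle n t / real n \<le> F01 t + R n / real n"
      using eventually_gt_at_top[of 0]
      by eventually_elim (use Sle_upper in \<open>simp add: field_simps mult.commute\<close>)
  qed
qed

lemma atom_lim: "(\<lambda>n. (\<Sum>i<n. indicator {t} (xs i) :: real) / real n) \<longlonglongrightarrow> 0"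
proof (rule Lim_null_comparison)
  show "(\<lambda>n. R n / real n) \<longlonglongrightarrow> 0" by (simp add: R_def lim_R)
  show "\<forall>\<^sub>F n in sequentially. norm ((\<Sum>i<n. indicator {t} (xs i) :: real) / real n) \<le> R n / real n"
    using atom_bound atom_nonneg by (intro always_eventually allI) (simp add: divide_right_mono)
qed

lemma emp_mu_pt_lim: "(\<lambda>n. emp_mu xs n {t}) \<longlonglongrightarrow> measure unif01 {t}"
  unfolding measure_unif01_pt using atom_lim[of t] by (simp add: emp_mu_def)

lemma emp_nu_pt_lim: "(\<lambda>n. emp_nu xs (Yk \<kappa>) n {t}) \<longlonglongrightarrow> 0"
proof (rule Lim_null_comparison)
  show "(\<lambda>n. R n / real n) \<longlonglongrightarrow> 0" by (simp add: R_def lim_R)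
  have "\<bar>\<Sum>i<n. Yk \<kappa> i * indicator {t} (xs i)\<bar> \<le> R n" for n
  proof -
    have "0 \<le> (\<Sum>i<n. Yk \<kappa> i * indicator {t} (xs i))"
    proof (intro sum_nonneg)
      fix i show "0 \<le> Yk \<kappa> i * indicator {t} (xs i)" using Yk_01[of \<kappa> i] by auto
    qed
    moreover have "(\<Sum>i<n. Yk \<kappa> i * indicator {t} (xs i)) \<le> (\<Sum>i<n. indicator {t} (xs i))"
    proof (intro sum_mono)
      fix i show "Yk \<kappa> i * indicator {t} (xs i) \<le> (indicator {t} (xs i) :: real)"
        using Yk_01[of \<kappa> i] by (auto simp: indicator_def)
    qed
    ultimately show ?thesis using atom_bound[where n=n and t=t] by simp
  qed
  thus "\<forall>\<^sub>F n in sequentially. norm (emp_nu xs (Yk \<kappa>) n {t}) \<le> R n / real n"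
    by (intro always_eventually allI) (simp add: emp_nu_def abs_divide divide_right_mono)
qed

lemma Aerr_lim:
  assumes mono: "\<And>i j. i \<le> j \<Longrightarrow> \<kappa> i \<le> \<kappa> j"
    and growth: "\<And>i. 256^(\<kappa> i) \<le> i + 1"
  shows "(\<lambda>n. Aerr \<kappa> n t / real n) \<longlonglongrightarrow> 0"
proof (rule Lim_null_comparison)
  show "(\<lambda>n. 4 * (real n + 1) powr (1/4) * R n / real n) \<longlonglongrightarrow> 0"
    by (simp add: R_def lim_err)
  show "\<forall>\<^sub>F n in sequentially. norm (Aerr \<kappa> n t / real n) \<le> 4 * (real n + 1) powr (1/4) * R n / real n"
    using Aerr_bound[OF mono growth]
    by (intro always_eventually allI) (simp add: abs_divide divide_right_mono)
qed

lemma stable_Y: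
  assumes mono: "\<And>i j. i \<le> j \<Longrightarrow> \<kappa> i \<le> \<kappa> j"
    and growth: "\<And>i. 256^(\<kappa> i) \<le> i + 1"
    and lim: "\<And>t. (\<lambda>i. cc (\<kappa> i) (F01 t)) \<longlonglongrightarrow> reg_nu unif01 m {..t}"
    and pt: "\<And>t. reg_nu unif01 m {t} = 0"
  shows "stable unif01 m xs (Yk \<kappa>)"
  unfolding stable_def
proof (intro allI conjI)
  fix t
  show "(\<lambda>n. emp_mu xs n {..t}) \<longlonglongrightarrow> measure unif01 {..t}" by (rule emp_mu_le_lim)
  show "(\<lambda>n. emp_mu xs n {t}) \<longlonglongrightarrow> measure unif01 {t}" by (rule emp_mu_pt_lim)
  show "(\<lambda>n. emp_nu xs (Yk \<kappa>) n {t}) \<longlonglongrightarrow> reg_nu unif01 m {t}"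
    unfolding pt by (rule emp_nu_pt_lim)
  have e: "emp_nu xs (Yk \<kappa>) n {..t} = Aerr \<kappa> n t / real n + (\<Sum>i<n. cc (\<kappa> i) (F01 t)) / real n" for n
    by (simp add: emp_nu_def Aerr_def sum_subtractf add_divide_distrib[symmetric])
  show "(\<lambda>n. emp_nu xs (Yk \<kappa>) n {..t}) \<longlonglongrightarrow> reg_nu unif01 m {..t}"
    unfolding e using tendsto_add[OF Aerr_lim[OF mono growth, of t] cesaro[OF lim[of t]]] by simp
qed



lemma pointwise_ineq:
  fixes a b :: real assumes "b \<in> {0, 1}"
  shows "ennreal (1/4) \<le> 2 * ennreal ((a - b)^2) + 2 * ennreal ((a - 1/2)^2)"
proof -
  have q: "(1/2 - b)^2 = 1/4" using assms by (auto simp: power2_eq_square)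
  have id: "2 * (a - b)^2 + 2 * (a - 1/2)^2 = (1/2 - b)^2 + (2 * a - b - 1/2)^2"
    by (simp add: power2_eq_square algebra_simps)
  have "1/4 \<le> 2 * (a - b)^2 + 2 * (a - 1/2)^2"
    unfolding id q by simp
  hence "ennreal (1/4) \<le> ennreal (2 * (a - b)^2 + 2 * (a - 1/2)^2)" by (rule ennreal_leI)
  also have "\<dots> = 2 * ennreal ((a - b)^2) + 2 * ennreal ((a - 1/2)^2)"
    by (simp add: ennreal_plus ennreal_mult)
  finally show ?thesis .
qed

lemma no_both_small:
  assumes f: "f \<in> borel_measurable borel" and b01: "\<And>u. b u \<in> {0, 1}" and bm: "b \<in> borel_measurable borel"
    and e1: "(\<integral>\<^sup>+ u. ennreal ((f u - b u)^2) \<partial>unif01) < ennreal (1/16)"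
    and e2: "(\<integral>\<^sup>+ u. ennreal ((f u - 1/2)^2) \<partial>unif01) < ennreal (1/16)"
  shows False
proof -
  let ?I1 = "\<integral>\<^sup>+ u. ennreal ((f u - b u)^2) \<partial>unif01"
  let ?I2 = "\<integral>\<^sup>+ u. ennreal ((f u - 1/2)^2) \<partial>unif01"
  have mc: "borel_measurable unif01 = (borel_measurable borel :: (real \<Rightarrow> real) set)"
    by (rule measurable_cong_sets) simp_all
  have fm: "f \<in> borel_measurable unif01" using f mc by simp
  have bm': "b \<in> borel_measurable unif01" using bm mc by simp
  have "ennreal (1/4) = (\<integral>\<^sup>+ u. ennreal (1/4) \<partial>unif01)" by (rule nn_integral_unif01_const[symmetric])
  also have "\<dots> \<le> (\<integral>\<^sup>+ u. 2 * ennreal ((f u - b u)^2) + 2 * ennreal ((f u - 1/2)^2) \<partial>unif01)"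
    by (intro nn_integral_mono pointwise_ineq b01)
  also have "\<dots> = 2 * ?I1 + 2 * ?I2"
    using fm bm' by (simp add: nn_integral_add nn_integral_cmult)
  finally have le: "ennreal (1/4) \<le> 2 * ?I1 + 2 * ?I2" .
  obtain r1 where r1: "?I1 = ennreal r1" "0 \<le> r1" using e1 by (cases ?I1 rule: ennreal_cases) auto
  obtain r2 where r2: "?I2 = ennreal r2" "0 \<le> r2" using e2 by (cases ?I2 rule: ennreal_cases) auto
  have "r1 < 1/16" using e1 r1 by (simp add: ennreal_less_iff)
  moreover have "r2 < 1/16" using e2 r2 by (simp add: ennreal_less_iff)
  moreover have "ennreal (1/4) \<le> ennreal (2 * r1 + 2 * r2)"
  proof -
    have "2 * ?I1 + 2 * ?I2 = ennreal (2 * r1 + 2 * r2)"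
    proof -
      have a: "ennreal (2 * r1 + 2 * r2) = ennreal (2 * r1) + ennreal (2 * r2)"
        using r1 r2 by (intro ennreal_plus) auto
      have b: "ennreal (2 * r1) = 2 * ennreal r1" "ennreal (2 * r2) = 2 * ennreal r2"
        using r1 r2 by (simp_all add: ennreal_mult)
      show ?thesis unfolding a b r1 r2 ..
    qed
    thus ?thesis using le by simp
  qed
  hence "1/4 \<le> 2 * r1 + 2 * r2" using r1 r2 by (subst (asm) ennreal_le_iff) auto
  ultimately show False by linarith
qed



theorem theorem2:
  fixes phi :: "nat \<Rightarrow> (real \<times> real) list \<Rightarrow> real \<Rightarrow> real"
  assumes "reg_procedure phi"
  shows "\<exists>(m :: real \<Rightarrow> real) (x :: nat \<Rightarrow> real) (y :: nat \<Rightarrow> real).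
           m \<in> borel_measurable borel \<and> integrable unif01 m \<and>
           total_var m 0 1 < \<infinity> \<and>
           stable unif01 m x y \<and>
           (\<forall>i. x i \<in> {0..1} \<and> y i \<in> {0, 1}) \<and>
           \<not> ((\<lambda>n. \<integral>\<^sup>+ u. ennreal ((phi n (sample x y n) u - m u)^2) \<partial>unif01) \<longlonglongrightarrow> 0)"
proof (rule ccontr)
  assume nt: "\<not> ?thesis"
  have H: "(\<lambda>n. \<integral>\<^sup>+ u. ennreal ((phi n (sample x y n) u - m u)^2) \<partial>unif01) \<longlonglongrightarrow> 0"
    if "m \<in> borel_measurable borel" "integrable unif01 m" "total_var m 0 1 < \<infinity>"
       "stable unif01 m x y" "\<forall>i. x i \<in> {0..1} \<and> y i \<in> {0, 1}" for m x y
  proof (rule ccontr)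
    assume nl: "\<not> (\<lambda>n. \<integral>\<^sup>+ u. ennreal ((phi n (sample x y n) u - m u)^2) \<partial>unif01) \<longlonglongrightarrow> 0"
    have "\<exists>(m :: real \<Rightarrow> real) (x :: nat \<Rightarrow> real) (y :: nat \<Rightarrow> real).
           m \<in> borel_measurable borel \<and> integrable unif01 m \<and>
           total_var m 0 1 < \<infinity> \<and>
           stable unif01 m x y \<and>
           (\<forall>i. x i \<in> {0..1} \<and> y i \<in> {0, 1}) \<and>
           \<not> ((\<lambda>n. \<integral>\<^sup>+ u. ennreal ((phi n (sample x y n) u - m u)^2) \<partial>unif01) \<longlonglongrightarrow> 0)"
      by (rule exI[of _ m], rule exI[of _ x], rule exI[of _ y]) (intro conjI that nl)
    with nt show False by contradiction
  qed
  have phim: "phi n s \<in> borel_measurable borel" for n s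
    using assms by (simp add: reg_procedure_def)
  have xs01: "xs i \<in> {0..1}" for i using xs_range[of i] by auto
  define er where "er F m n = (\<integral>\<^sup>+ u. ennreal ((phi n (sample xs (Yk F) n) u - m u)^2) \<partial>unif01)"
    for F m n
  have hyp: "er F (mk k) \<longlonglongrightarrow> 0"
    if mono: "\<And>i j. i \<le> j \<Longrightarrow> F i \<le> F j" and gr: "\<And>i. 256^(F i) \<le> i + 1"
      and ev: "\<And>i. M \<le> i \<Longrightarrow> F i = k" for F k M
  proof -
    have st: "stable unif01 (mk k) xs (Yk F)"
    proof (rule stable_Y[OF mono gr])
      fix t
      have "eventually (\<lambda>i. cc (F i) (F01 t) = reg_nu unif01 (mk k) {..t}) sequentially"
        unfolding eventually_sequentially using ev by (auto simp: reg_nu_mk_le)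
      thus "(\<lambda>i. cc (F i) (F01 t)) \<longlonglongrightarrow> reg_nu unif01 (mk k) {..t}" by (rule tendsto_eventually)
      show "reg_nu unif01 (mk k) {t} = 0" by (rule reg_nu_mk_pt)
    qed
    have r: "\<forall>i. xs i \<in> {0..1} \<and> Yk F i \<in> {0, 1}" using xs01 Yk_01 by blast
    show ?thesis unfolding er_def by (rule H[OF mk_meas mk_integrable mk_tv st r])
  qed
  define ch where "ch k F M = (SOME n. M < n \<and> 256^(Suc k) \<le> n + 1 \<and> er F (mk k) n < ennreal (1/16))"
    for k F M
  define st where "st = rec_nat ((\<lambda>_. 0) :: nat \<Rightarrow> nat, 0::nat)
     (\<lambda>k p. (\<lambda>i. if i < ch k (fst p) (snd p) then fst p i else Suc k, ch k (fst p) (snd p)))"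
  define Kf where "Kf k = fst (st k)" for k
  define Mf where "Mf k = snd (st k)" for k
  have K0: "Kf 0 = (\<lambda>_. 0)" "Mf 0 = 0" by (simp_all add: Kf_def Mf_def st_def)
  have MS: "Mf (Suc k) = ch k (Kf k) (Mf k)" for k by (simp add: Kf_def Mf_def st_def)
  have KS: "Kf (Suc k) i = (if i < Mf (Suc k) then Kf k i else Suc k)" for k i
    by (simp add: Kf_def Mf_def st_def)
  define Inv where "Inv k \<longleftrightarrow> (\<forall>i j. i \<le> j \<longrightarrow> Kf k i \<le> Kf k j) \<and> (\<forall>i. 256^(Kf k i) \<le> i + 1)
      \<and> (\<forall>i. Kf k i \<le> k) \<and> (\<forall>i. Mf k \<le> i \<longrightarrow> Kf k i = k) \<and> k \<le> Mf k" for k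
  have chP: "Mf k < Mf (Suc k) \<and> 256^(Suc k) \<le> Mf (Suc k) + 1 \<and> er (Kf k) (mk k) (Mf (Suc k)) < ennreal (1/16)"
    if I: "Inv k" for k
  proof -
    have l: "er (Kf k) (mk k) \<longlonglongrightarrow> 0"
    proof (rule hyp[where F="Kf k" and k=k and M="Mf k"])
      show "\<And>i j. i \<le> j \<Longrightarrow> Kf k i \<le> Kf k j" "\<And>i. 256^(Kf k i) \<le> i + 1"
        "\<And>i. Mf k \<le> i \<Longrightarrow> Kf k i = k" using I unfolding Inv_def by auto
    qed
    have "eventually (\<lambda>n. er (Kf k) (mk k) n < ennreal (1/16)) sequentially"
      using order_tendstoD(2)[OF l] by simp
    moreover have "eventually (\<lambda>n. Mf k < n \<and> 256^(Suc k) \<le> n + 1) sequentially"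
      using eventually_ge_at_top[of "Suc (Mf k) + 256^(Suc k)"] by eventually_elim auto
    ultimately have "eventually (\<lambda>n. Mf k < n \<and> 256^(Suc k) \<le> n + 1 \<and> er (Kf k) (mk k) n < ennreal (1/16)) sequentially"
      by eventually_elim auto
    then obtain N where "\<forall>n\<ge>N. Mf k < n \<and> 256^(Suc k) \<le> n + 1 \<and> er (Kf k) (mk k) n < ennreal (1/16)"
      unfolding eventually_sequentially by blast
    hence "\<exists>n. Mf k < n \<and> 256^(Suc k) \<le> n + 1 \<and> er (Kf k) (mk k) n < ennreal (1/16)" by blast
    hence "Mf k < ch k (Kf k) (Mf k) \<and> 256^(Suc k) \<le> ch k (Kf k) (Mf k) + 1 \<and> er (Kf k) (mk k) (ch k (Kf k) (Mf k)) < ennreal (1/16)"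
      unfolding ch_def by (rule someI_ex)
    thus ?thesis unfolding MS .
  qed
  have inv: "Inv k" for k
  proof (induction k)
    case 0 show ?case by (simp add: Inv_def K0)
  next
    case (Suc k)
    note c = chP[OF Suc]
    have I: "\<And>i j. i \<le> j \<Longrightarrow> Kf k i \<le> Kf k j" "\<And>i. 256^(Kf k i) \<le> i + 1" "\<And>i. Kf k i \<le> k"
      "\<And>i. Mf k \<le> i \<Longrightarrow> Kf k i = k" "k \<le> Mf k"
      using Suc unfolding Inv_def by auto
    show ?case unfolding Inv_def
    proof (intro conjI allI impI)
      fix i j :: nat assume ij: "i \<le> j"
      show "Kf (Suc k) i \<le> Kf (Suc k) j"
        using ij I(1)[OF ij] I(3)[of i] unfolding KS by auto
    next
      fix i
      show "256^(Kf (Suc k) i) \<le> i + 1"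
      proof (cases "i < Mf (Suc k)")
        case True thus ?thesis using I(2)[of i] unfolding KS by simp
      next
        case False thus ?thesis using c unfolding KS by auto
      qed
    next
      fix i show "Kf (Suc k) i \<le> Suc k" using I(3)[of i] unfolding KS by auto
    next
      fix i assume "Mf (Suc k) \<le> i" thus "Kf (Suc k) i = Suc k" unfolding KS by auto
    next
      show "Suc k \<le> Mf (Suc k)" using c I(5) by linarith
    qed
  qed
  have Mmono: "Mf k < Mf (Suc k)" for k using chP[OF inv] by blast
  have Mmono2: "Mf k \<le> Mf m" if "k \<le> m" for k m
    using that
  proof (induction rule: dec_induct)
    case (step m) thus ?case using Mmono[of m] by linarith
  qed simp
  have Mge: "k \<le> Mf k" for k using inv[of k] unfolding Inv_def by blast
  have stab: "Kf m i = Kf k i" if "k \<le> m" "i < Mf (Suc k)" for k m i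
    using that(1)
  proof (induction rule: dec_induct)
    case base show ?case ..
  next
    case (step m)
    have "Mf (Suc k) \<le> Mf (Suc m)" using step(1) by (intro Mmono2) simp
    hence "i < Mf (Suc m)" using that(2) by linarith
    thus ?case using step(3) unfolding KS by simp
  qed
  define \<kappa> where "\<kappa> i = Kf i i" for i
  have kap_eq: "\<kappa> i = Kf m i" if "i \<le> m" for i m
  proof -
    have h: "i < Mf (Suc i)" using Mge[of "Suc i"] by simp
    show ?thesis unfolding \<kappa>_def using stab[of i m i, OF that h] by (rule sym)
  qed
  have kap_K: "\<kappa> i = Kf k i" if "i < Mf (Suc k)" for i k
  proof (cases "i \<le> k")
    case True thus ?thesis by (rule kap_eq)
  next
    case False
    hence "k \<le> i" by simp
    thus ?thesis unfolding \<kappa>_def by (rule stab[of k i i, OF _ that])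
  qed
  have Kmono_m: "Kf k i \<le> Kf m i" if "k \<le> m" for k m i
    using that
  proof (induction rule: dec_induct)
    case base show ?case ..
  next
    case (step m)
    have "Kf m i \<le> m" using inv[of m] unfolding Inv_def by blast
    thus ?case using step(3) unfolding KS by auto
  qed
  have kmono: "\<kappa> i \<le> \<kappa> j" if "i \<le> j" for i j
  proof -
    have "\<kappa> i = Kf j i" using kap_eq[OF that] .
    also have "\<dots> \<le> Kf j j" using inv[of j] that unfolding Inv_def by blast
    finally show ?thesis unfolding \<kappa>_def .
  qed
  have kgr: "256^(\<kappa> i) \<le> i + 1" for i using inv[of i] unfolding Inv_def \<kappa>_def by blast
  have kinf: "filterlim \<kappa> at_top sequentially"
    unfolding filterlim_at_top eventually_sequentially
  proof (intro allI)
    fix k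
    show "\<exists>N. \<forall>n\<ge>N. k \<le> \<kappa> n"
    proof (intro exI[of _ "Mf k"] allI impI)
      fix i assume i: "Mf k \<le> i"
      have a: "\<kappa> i = Kf (max i k) i" by (rule kap_eq) simp
      have b: "Kf k i \<le> Kf (max i k) i" by (rule Kmono_m) simp
      have c: "Kf k i = k" using inv[of k] i unfolding Inv_def by blast
      show "k \<le> \<kappa> i" using a b c by simp
    qed
  qed
  have stF: "stable unif01 (\<lambda>_. 1/2) xs (Yk \<kappa>)"
  proof (rule stable_Y[OF kmono kgr])
    fix t
    show "(\<lambda>i. cc (\<kappa> i) (F01 t)) \<longlonglongrightarrow> reg_nu unif01 (\<lambda>_. 1/2) {..t}"
      unfolding reg_nu_half_le by (rule filterlim_compose[OF cc_lim kinf])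
    show "reg_nu unif01 (\<lambda>_. 1/2) {t} = 0" by (rule reg_nu_half_pt)
  qed
  have tvh: "total_var (\<lambda>_. 1/2 :: real) 0 1 < \<infinity>"
  proof -
    have "total_var (\<lambda>_. 1/2 :: real) 0 1 \<le> ereal (1/2 + 0)"
      by (rule tv_bound[where f="\<lambda>_. 1/2" and g="\<lambda>_. 0"]) auto
    moreover have "ereal (1/2 + 0) < \<infinity>" by simp
    ultimately show ?thesis by (rule le_less_trans)
  qed
  have inth: "integrable unif01 (\<lambda>_. 1/2 :: real)"
    using finite_measure.integrable_const[OF finite_measure_unif01] .
  have r: "\<forall>i. xs i \<in> {0..1} \<and> Yk \<kappa> i \<in> {0, 1}" using xs01 Yk_01 by blast
  have lim: "er \<kappa> (\<lambda>_. 1/2) \<longlonglongrightarrow> 0"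
    unfolding er_def by (rule H[OF borel_measurable_const inth tvh stF r])
  have "eventually (\<lambda>n. er \<kappa> (\<lambda>_. 1/2) n < ennreal (1/16)) sequentially"
    using order_tendstoD(2)[OF lim] by simp
  then obtain N where N: "\<And>n. N \<le> n \<Longrightarrow> er \<kappa> (\<lambda>_. 1/2) n < ennreal (1/16)"
    unfolding eventually_sequentially by blast
  define n where "n = Mf (Suc N)"
  have nN: "N \<le> n" using Mge[of "Suc N"] unfolding n_def by simp
  have samp: "sample xs (Yk \<kappa>) n = sample xs (Yk (Kf N)) n"
    unfolding sample_def Yk_def n_def
  proof (intro map_cong refl)
    fix i assume "i \<in> set [0..<Mf (Suc N)]"
    hence "i < Mf (Suc N)" by simp
    thus "(xs i, mk (\<kappa> i) (xs i)) = (xs i, mk (Kf N i) (xs i))" using kap_K by simp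
  qed
  have e2: "(\<integral>\<^sup>+ u. ennreal ((phi n (sample xs (Yk (Kf N)) n) u - 1/2)^2) \<partial>unif01) < ennreal (1/16)"
    using N[OF nN] unfolding er_def samp .
  have e1: "(\<integral>\<^sup>+ u. ennreal ((phi n (sample xs (Yk (Kf N)) n) u - mk N u)^2) \<partial>unif01) < ennreal (1/16)"
    using chP[OF inv[of N]] unfolding er_def n_def by blast
  show False by (rule no_both_small[OF phim mk_01 mk_meas e1 e2])
qed

end
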